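(* Let $S$ and $A$ be finite-dimensional quantum systems with Hilbert spaces $\mathcal H_S\cong\mathbb C^{d_S}$ and $\mathcal H_A\cong\mathbb C^{d_A}$, and let $H_S=\sum_{k=1}^{d_S}\epsilon_k|\epsilon_k\rangle\langle\epsilon_k|$ with $\epsilon_1<\epsilon_2<\dots<\epsilon_{d_S}$. Fix a real number $r\neq 0$ and the utility function $u(w)=\frac{1}{r}(1-e^{-rw})$. Let $\rho_{SA}$ be a density matrix on $\mathcal H_S\otimes\mathcal H_A$, $\rho_S=\mathrm{Tr}_A\rho_{SA}$, and let $\{|a\rangle\}_{a=1}^{d_A}$ be any orthonormal basis of $\mathcal H_A$ with projectors $\Pi^A_a=|a\rangle\langle a|$. Write the spectral decompositions $e^{-rH_S/2}\rho_S e^{-rH_S/2}=\sum_k u_k|u_k\rangle\langle u_k|$ with $u_1\ge u_2\ge\dots$, and, for each $a$ with $p_a>0$, $e^{-rH_S/2}\rho_{S|a}e^{-rH_S/2}=\sum_k u^a_k|u^a_k\rangle\langle u^a_k|$ with $u^a_1\ge u^a_2\ge\dots$. Set $y_k=e^{r\epsilon_k}/r$ (so $y_k<y_{k+1}$), $\tilde H_S=\sum_k y_k|u_k\rangle\langle u_k|$ and $\tilde\rho_{S|a}=e^{-rH_S/2}\rho_{S|a}e^{-rH_S/2}$. Then $$\mathcal U_{\{\Pi^A_a\}}(\rho_{SA})-\mathcal U(\rho_S)=\sum_{a:\,p_a>0}p_a\,\tilde{\mathcal E}(\tilde\rho_{S|a})\ge 0,$$ where $\tilde{\mathcal E}(\tilde\rho_{S|a})$,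 the ergotropy of the (non-normalized) operator $\tilde\rho_{S|a}$ with respect to $\tilde H_S$, is given explicitly by $$\tilde{\mathcal E}(\tilde\rho_{S|a})=\sum_{k,j}u^a_j\left(|\langle u_k|u^a_j\rangle|^2-\delta_{j,k}\right)y_k .$$
   Context: Conditional states: for an orthonormal basis $\{|a\rangle\}$ of $\mathcal H_A$, $p_a=\mathrm{Tr}[(I^S\otimes\Pi^A_a)\rho_{SA}]$ and, when $p_a>0$, $\rho_{S|a}=\mathrm{Tr}_A[(I^S\otimes\Pi^A_a)\rho_{SA}(I^S\otimes\Pi^A_a)]/p_a$. For a density matrix $\rho$ on $\mathcal H_S$ and a unitary $U$, the expected utility (with respect to the symmetric work quasiprobability) is $$\langle u(w)\rangle_{\rho,U}=\sum_{i,j,k}\mathrm{Re}\big(\langle\epsilon_i|\rho|\epsilon_j\rangle\langle\epsilon_j|U^\dagger|\epsilon_k\rangle\langle\epsilon_k|U|\epsilon_i\rangle\big)\,u\!\left(\tfrac{\epsilon_i+\epsilon_j}{2}-\epsilon_k\right),$$ the optimal expected utility is $\mathcal U(\rho)=\max_{U}\langle u(w)\rangle_{\rho,U}$ (maximum over unitaries on $\mathcal H_S$), and the daemonic expected utility is $\mathcal U_{\{\Pi^A_a\}}(\rho_{SA})=\sum_{a:\,p_a>0}p_a\,\mathcal U(\rho_{S|a})$. The ergotropy of a positive semidefinite operator $X$ with respect to a Hermitian operator $K$ is $\max_V\big(\mathrm{Tr}[KX]-\mathrm{Tr}[KVXV^\dagger]\big)$ over unitaries $V$. *)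

theory Defs
  imports Complex_Main "Jordan_Normal_Form.Matrix"
begin

(* Finite-dimensional quantum mechanics with explicit complex matrices.
   H_S = C^dS, H_A = C^dA, H_S (x) H_A = C^(dS*dA) with the product basis
   vector |i>|b> at index i*dA + b (i < dS, b < dA). *)

definition adj :: "complex mat \<Rightarrow> complex mat" where
  "adj A = mat (dim_col A) (dim_row A) (\<lambda>(i,j). cnj (A $$ (j,i)))"

definition mtrace :: "complex mat \<Rightarrow> complex" where
  "mtrace A = (\<Sum>i<dim_row A. A $$ (i,i))"

definition unitary :: "nat \<Rightarrow> complex mat \<Rightarrow> bool" where
  "unitary n U \<longleftrightarrow> U \<in> carrier_mat n n \<and> adj U * U = 1\<^sub>m n \<and> U * adj U = 1\<^sub>m n"

definition psd :: "nat \<Rightarrow> complex mat \<Rightarrow> bool" where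
  "psd n X \<longleftrightarrow> X \<in> carrier_mat n n \<and> adj X = X \<and>
     (\<forall>v. 0 \<le> Re (\<Sum>i<n. \<Sum>j<n. cnj (v i) * X $$ (i,j) * v j))"

definition density :: "nat \<Rightarrow> complex mat \<Rightarrow> bool" where
  "density n \<rho> \<longleftrightarrow> psd n \<rho> \<and> mtrace \<rho> = 1"

definition diagm :: "nat \<Rightarrow> (nat \<Rightarrow> complex) \<Rightarrow> complex mat" where
  "diagm n f = mat n n (\<lambda>(i,j). if i = j then f i else 0)"

definition ptrace_A :: "nat \<Rightarrow> nat \<Rightarrow> complex mat \<Rightarrow> complex mat" where
  "ptrace_A dS dA X = mat dS dS (\<lambda>(i,j). \<Sum>b<dA. X $$ (i*dA+b, j*dA+b))"

(* I^S (x) Pi^A_a, where |a> is column a of the unitary B *)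
definition proj_A :: "nat \<Rightarrow> nat \<Rightarrow> complex mat \<Rightarrow> nat \<Rightarrow> complex mat" where
  "proj_A dS dA B a = mat (dS*dA) (dS*dA)
     (\<lambda>(p,q). if p div dA = q div dA then B $$ (p mod dA, a) * cnj (B $$ (q mod dA, a)) else 0)"

definition prob_a :: "nat \<Rightarrow> nat \<Rightarrow> complex mat \<Rightarrow> complex mat \<Rightarrow> nat \<Rightarrow> real" where
  "prob_a dS dA B \<rho> a = Re (mtrace (proj_A dS dA B a * \<rho>))"

definition cond_state :: "nat \<Rightarrow> nat \<Rightarrow> complex mat \<Rightarrow> complex mat \<Rightarrow> nat \<Rightarrow> complex mat" where
  "cond_state dS dA B \<rho> a =
     (1 / complex_of_real (prob_a dS dA B \<rho> a)) \<cdot>\<^sub>m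
       ptrace_A dS dA (proj_A dS dA B a * \<rho> * proj_A dS dA B a)"

(* matrix element <eps_i| X |eps_j>, energy eigenbasis = columns of W *)
definition melem :: "complex mat \<Rightarrow> complex mat \<Rightarrow> nat \<Rightarrow> nat \<Rightarrow> complex" where
  "melem W X i j = (adj W * X * W) $$ (i,j)"

(* expected utility w.r.t. the symmetric work quasiprobability *)
definition exp_util ::
  "nat \<Rightarrow> complex mat \<Rightarrow> (nat \<Rightarrow> real) \<Rightarrow> (real \<Rightarrow> real) \<Rightarrow> complex mat \<Rightarrow> complex mat \<Rightarrow> real" where
  "exp_util n W \<epsilon> u \<rho> U =
     (\<Sum>i<n. \<Sum>j<n. \<Sum>k<n.
        Re (melem W \<rho> i j * melem W (adj U) j k * melem W U k i) *
        u ((\<epsilon> i + \<epsilon> j) / 2 - \<epsilon> k))"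

definition opt_util ::
  "nat \<Rightarrow> complex mat \<Rightarrow> (nat \<Rightarrow> real) \<Rightarrow> (real \<Rightarrow> real) \<Rightarrow> complex mat \<Rightarrow> real" where
  "opt_util n W \<epsilon> u \<rho> = Sup {exp_util n W \<epsilon> u \<rho> U | U. unitary n U}"

definition daemonic_util ::
  "nat \<Rightarrow> nat \<Rightarrow> complex mat \<Rightarrow> (nat \<Rightarrow> real) \<Rightarrow> (real \<Rightarrow> real) \<Rightarrow> complex mat \<Rightarrow> complex mat \<Rightarrow> real" where
  "daemonic_util dS dA W \<epsilon> u B \<rho> =
     (\<Sum>a\<in>{a. a < dA \<and> prob_a dS dA B \<rho> a > 0}.
        prob_a dS dA B \<rho> a * opt_util dS W \<epsilon> u (cond_state dS dA B \<rho> a))"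

definition ergotropy :: "nat \<Rightarrow> complex mat \<Rightarrow> complex mat \<Rightarrow> real" where
  "ergotropy n K X = Sup {Re (mtrace (K * X)) - Re (mtrace (K * V * X * adj V)) | V. unitary n V}"

end

theory Submission
  imports Defs
begin

lemma abel_nonneg:
  fixes d w :: "nat \<Rightarrow> real"
  assumes "\<And>m. m \<le> n \<Longrightarrow> 0 \<le> (\<Sum>j<m. d j)"
    and "\<And>i j. i \<le> j \<Longrightarrow> j < n \<Longrightarrow> w j \<le> w i"
    and "0 < n \<Longrightarrow> 0 \<le> w (n - 1)"
  shows "0 \<le> (\<Sum>j<n. d j * w j)"
  using assms
proof (induction n arbitrary: w)
  case 0
  then show ?case by simp
next
  case (Suc n)
  have eq: "(\<Sum>j<Suc n. d j * w j) = (\<Sum>j<n. d j * (w j - w n)) + w n * (\<Sum>j<Suc n. d j)"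
    by (simp add: algebra_simps sum_distrib_left sum_subtractf)
  have "0 \<le> (\<Sum>j<n. d j * (w j - w n))"
  proof (rule Suc.IH)
    show "\<And>m. m \<le> n \<Longrightarrow> 0 \<le> (\<Sum>j<m. d j)" using Suc.prems(1) by simp
    show "\<And>i j. i \<le> j \<Longrightarrow> j < n \<Longrightarrow> w j - w n \<le> w i - w n" using Suc.prems(2) by simp
    show "0 < n \<Longrightarrow> 0 \<le> w (n - 1) - w n" using Suc.prems(2)[of "n-1" n] by simp
  qed
  moreover have "0 \<le> w n * (\<Sum>j<Suc n. d j)" using Suc.prems(1)[of "Suc n"] Suc.prems(3) by simp
  ultimately show ?case using eq by simp
qed

lemma rearrangement:
  fixes D :: "nat \<Rightarrow> nat \<Rightarrow> real" and y w :: "nat \<Rightarrow> real"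
  assumes nn: "\<And>k j. k < n \<Longrightarrow> j < n \<Longrightarrow> 0 \<le> D k j"
    and row: "\<And>k. k < n \<Longrightarrow> (\<Sum>j<n. D k j) = 1"
    and col: "\<And>j. j < n \<Longrightarrow> (\<Sum>k<n. D k j) = 1"
    and ymono: "\<And>i j. i \<le> j \<Longrightarrow> j < n \<Longrightarrow> y i \<le> y j"
    and wanti: "\<And>i j. i \<le> j \<Longrightarrow> j < n \<Longrightarrow> w j \<le> w i"
  shows "(\<Sum>k<n. y k * w k) \<le> (\<Sum>k<n. \<Sum>j<n. y k * D k j * w j)"
proof (cases "n = 0")
  case True then show ?thesis by simp
next
  case False
  define c where "c j = (\<Sum>k<n. y k * D k j)" for j
  define d where "d j = c j - y j" for j
  have part: "0 \<le> (\<Sum>j<m. d j)" if "m \<le> n" for m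
  proof (cases "m = n")
    case True
    have "(\<Sum>j<n. c j) = (\<Sum>k<n. y k * (\<Sum>j<n. D k j))"
      unfolding c_def sum_distrib_left by (rule sum.swap)
    also have "\<dots> = (\<Sum>k<n. y k)" using row by simp
    finally show ?thesis using True by (simp add: d_def sum_subtractf)
  next
    case False
    with that have mn: "m < n" by simp
    define s where "s k = (\<Sum>j<m. D k j)" for k
    have s1: "s k \<le> 1" if "k < n" for k
    proof -
      have "s k \<le> (\<Sum>j<n. D k j)" unfolding s_def
        by (rule sum_mono2) (use mn nn that in auto)
      then show ?thesis using row that by simp
    qed
    have s0: "0 \<le> s k" if "k < n" for k unfolding s_def using nn that mn by (auto intro: sum_nonneg)
    have ssum: "(\<Sum>k<n. s k) = real m"
    proof -
      have "(\<Sum>k<n. s k) = (\<Sum>j<m. \<Sum>k<n. D k j)" unfolding s_def by (rule sum.swap)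
      also have "\<dots> = (\<Sum>j<m. 1)" by (rule sum.cong) (use col mn in auto)
      finally show ?thesis by simp
    qed
    have cs: "(\<Sum>j<m. c j) = (\<Sum>k<n. y k * s k)"
      unfolding c_def s_def sum_distrib_left by (rule sum.swap)
    have ys: "(\<Sum>j<m. y j) = (\<Sum>k<n. y k * (if k < m then 1 else 0))"
    proof -
      have "(\<Sum>k<n. y k * (if k < m then 1 else 0)) = (\<Sum>k\<in>{..<n} \<inter> {k. k < m}. y k)"
      proof -
        have "(\<Sum>k<n. y k * (if k < m then 1 else 0)) = (\<Sum>k<n. if k \<in> {k. k < m} then y k else 0)"
          by (rule sum.cong) auto
        then show ?thesis by (simp only: sum.inter_restrict[symmetric] finite_lessThan)
      qed
      also have "{..<n} \<inter> {k. k < m} = {..<m}" using mn by auto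
      finally show ?thesis by simp
    qed
    have "(\<Sum>k<n. y m * (s k - (if k < m then 1 else 0))) \<le> (\<Sum>k<n. y k * (s k - (if k < m then 1 else 0)))"
    proof (rule sum_mono)
      fix k assume k: "k \<in> {..<n}"
      show "y m * (s k - (if k < m then 1 else 0)) \<le> y k * (s k - (if k < m then 1 else 0))"
      proof (cases "k < m")
        case True
        then have "y k \<le> y m" using ymono mn by simp
        moreover have "s k - 1 \<le> 0" using s1 k by simp
        ultimately show ?thesis using True by (simp add: mult_right_mono_neg)
      next
        case False
        then have "y m \<le> y k" using ymono k by simp
        then show ?thesis using False s0 k by (simp add: mult_right_mono)
      qed
    qed
    moreover have "(\<Sum>k<n. y m * (s k - (if k < m then 1 else 0))) = 0"
    proof -
      have "(\<Sum>k<n. (if k < m then 1 else 0::real)) = (\<Sum>k\<in>{..<n} \<inter> {k. k < m}. 1)"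
        by (simp only: sum.inter_restrict finite_lessThan mem_Collect_eq)
      also have "{..<n} \<inter> {k. k < m} = {..<m}" using mn by auto
      finally have "(\<Sum>k<n. (if k < m then 1 else 0::real)) = real m" by simp
      then show ?thesis by (simp add: sum_distrib_left[symmetric] sum_subtractf ssum)
    qed
    ultimately have "0 \<le> (\<Sum>k<n. y k * s k) - (\<Sum>k<n. y k * (if k < m then 1 else 0))"
      by (simp add: right_diff_distrib sum_subtractf)
    then show ?thesis by (simp add: d_def sum_subtractf cs ys)
  qed
  have tot: "(\<Sum>j<n. d j) = 0"
  proof -
    have "(\<Sum>j<n. c j) = (\<Sum>k<n. y k * (\<Sum>j<n. D k j))"
      unfolding c_def sum_distrib_left by (rule sum.swap)
    also have "\<dots> = (\<Sum>k<n. y k)" using row by simp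
    finally show ?thesis by (simp add: d_def sum_subtractf)
  qed
  have "0 \<le> (\<Sum>j<n. d j * (w j - w (n - 1)))"
    by (rule abel_nonneg) (use part wanti False in auto)
  also have "(\<Sum>j<n. d j * (w j - w (n - 1))) = (\<Sum>j<n. d j * w j)"
    using tot by (simp add: right_diff_distrib sum_subtractf sum_distrib_right[symmetric])
  also have "(\<Sum>j<n. d j * w j) = (\<Sum>k<n. \<Sum>j<n. y k * D k j * w j) - (\<Sum>k<n. y k * w k)"
  proof -
    have "(\<Sum>j<n. d j * w j) = (\<Sum>j<n. \<Sum>k<n. y k * D k j * w j) - (\<Sum>k<n. y k * w k)"
      unfolding d_def c_def left_diff_distrib sum_subtractf sum_distrib_right by simp
    also have "(\<Sum>j<n. \<Sum>k<n. y k * D k j * w j) = (\<Sum>k<n. \<Sum>j<n. y k * D k j * w j)"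
      by (rule sum.swap)
    finally show ?thesis .
  qed
  finally show ?thesis by simp
qed

lemma adj_dims[simp]: "dim_row (adj A) = dim_col A" "dim_col (adj A) = dim_row A"
  unfolding adj_def by simp_all

lemma adj_carrier[simp]: "A \<in> carrier_mat n m \<Longrightarrow> adj A \<in> carrier_mat m n"
  unfolding carrier_mat_def by simp

lemma adj_index[simp]: "i < dim_col A \<Longrightarrow> j < dim_row A \<Longrightarrow> adj A $$ (i,j) = cnj (A $$ (j,i))"
  unfolding adj_def by simp

lemma adj_adj[simp]: "adj (adj A) = A"
  by (rule eq_matI) simp_all

lemma adj_mult: assumes "A \<in> carrier_mat n m" "B \<in> carrier_mat m k" shows "adj (A * B) = adj B * adj A"
proof (rule eq_matI)
  fix i j assume "i < dim_row (adj B * adj A)" "j < dim_col (adj B * adj A)"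
  then have i: "i < k" and j: "j < n" using assms by auto
  show "adj (A * B) $$ (i, j) = (adj B * adj A) $$ (i, j)"
    using assms i j by (simp add: scalar_prod_def mult.commute)
qed (use assms in auto)

lemma adj_one[simp]: "adj (1\<^sub>m n) = 1\<^sub>m n"
  by (rule eq_matI) simp_all

lemma mtrace_entries: "A \<in> carrier_mat n m \<Longrightarrow> B \<in> carrier_mat m n \<Longrightarrow>
   mtrace (A * B) = (\<Sum>i<n. \<Sum>j<m. A $$ (i,j) * B $$ (j,i))"
  by (auto simp: mtrace_def scalar_prod_def atLeast0LessThan intro!: sum.cong)

lemma mtrace_comm: "A \<in> carrier_mat n m \<Longrightarrow> B \<in> carrier_mat m n \<Longrightarrow> mtrace (A * B) = mtrace (B * A)"
  apply (simp add: mtrace_entries)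
  apply (subst sum.swap)
  apply (simp add: mult.commute)
  done

lemma diagm_carrier[simp]: "diagm n f \<in> carrier_mat n n"
  by (simp add: diagm_def)

lemma diagm_dims[simp]: "dim_row (diagm n f) = n" "dim_col (diagm n f) = n"
  by (simp_all add: diagm_def)

lemma diag_left: assumes "A \<in> carrier_mat n m" "i < n" "j < m" shows "(diagm n f * A) $$ (i,j) = f i * A $$ (i,j)"
proof -
  have "(diagm n f * A) $$ (i,j) = (\<Sum>k\<in>{0..<n}. (if i = k then f i else 0) * A $$ (k,j))"
    using assms by (simp add: diagm_def scalar_prod_def)
  also have "\<dots> = (\<Sum>k\<in>{0..<n}. (if k = i then f i * A $$ (k,j) else 0))"
    by (rule sum.cong) auto
  finally show ?thesis using assms by simp
qed

lemma diag_right: assumes "A \<in> carrier_mat n m" "i < n" "j < m" shows "(A * diagm m f) $$ (i,j) = A $$ (i,j) * f j"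
proof -
  have "(A * diagm m f) $$ (i,j) = (\<Sum>k\<in>{0..<m}. A $$ (i,k) * (if k = j then f k else 0))"
    using assms by (simp add: diagm_def scalar_prod_def)
  also have "\<dots> = (\<Sum>k\<in>{0..<m}. (if k = j then A $$ (i,k) * f j else 0))"
    by (rule sum.cong) auto
  finally show ?thesis using assms by simp
qed

lemma unitaryD: assumes "unitary n U"
  shows "U \<in> carrier_mat n n" "adj U * U = 1\<^sub>m n" "U * adj U = 1\<^sub>m n"
  using assms by (auto simp: unitary_def)

lemma mult_nn[simp]: "A \<in> carrier_mat n n \<Longrightarrow> B \<in> carrier_mat n n \<Longrightarrow> A * B \<in> carrier_mat n n"
  by simp

lemma assocR: "A \<in> carrier_mat n n \<Longrightarrow> B \<in> carrier_mat n n \<Longrightarrow> C \<in> carrier_mat n n \<Longrightarrow> A * B * C = A * (B * C)"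
  by simp

lemma cancel1: "unitary n P \<Longrightarrow> B \<in> carrier_mat n n \<Longrightarrow> adj P * (P * B) = B"
  by (simp add: unitary_def assoc_mult_mat[of "adj P" n n P n B n, symmetric])

lemma cancel2: "unitary n P \<Longrightarrow> B \<in> carrier_mat n n \<Longrightarrow> P * (adj P * B) = B"
  by (simp add: unitary_def assoc_mult_mat[of P n n "adj P" n B n, symmetric])

lemma unitary_mult: assumes "unitary n P" "unitary n Q" shows "unitary n (P * Q)"
proof -
  note c = unitaryD[OF assms(1)] unitaryD[OF assms(2)]
  have 1: "adj (P * Q) * (P * Q) = 1\<^sub>m n"
    using c assms by (simp add: adj_mult[of _ n n _ n] assocR[of _ n] cancel1)
  have "(P * Q) * adj (P * Q) = 1\<^sub>m n"
    using c assms by (simp add: adj_mult[of _ n n _ n] assocR[of _ n] cancel2)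
  then show ?thesis using 1 c by (simp add: unitary_def)
qed

lemma unitary_adj: "unitary n U \<Longrightarrow> unitary n (adj U)"
  by (auto simp: unitary_def)

lemma unitary_one: "unitary n (1\<^sub>m n)"
  by (auto simp: unitary_def)

lemma unitary_row: assumes "unitary n Q" "k < n" shows "(\<Sum>j<n. (cmod (Q $$ (k,j)))\<^sup>2) = 1"
proof -
  note c = unitaryD[OF assms(1)]
  have "(Q * adj Q) $$ (k,k) = 1" using c assms(2) by simp
  moreover have "(Q * adj Q) $$ (k,k) = (\<Sum>j<n. Q $$ (k,j) * cnj (Q $$ (k,j)))"
    using c(1) assms(2) by (auto simp: scalar_prod_def atLeast0LessThan intro!: sum.cong)
  ultimately have "(\<Sum>j<n. Q $$ (k,j) * cnj (Q $$ (k,j))) = 1" by simp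
  moreover have "complex_of_real (\<Sum>j<n. (cmod (Q $$ (k,j)))\<^sup>2) = (\<Sum>j<n. Q $$ (k,j) * cnj (Q $$ (k,j)))"
    by (simp only: of_real_sum complex_norm_square)
  ultimately have "complex_of_real (\<Sum>j<n. (cmod (Q $$ (k,j)))\<^sup>2) = 1" by simp
  then show ?thesis using of_real_eq_1_iff by blast
qed

lemma unitary_col: assumes "unitary n Q" "j < n" shows "(\<Sum>k<n. (cmod (Q $$ (k,j)))\<^sup>2) = 1"
proof -
  note c = unitaryD[OF assms(1)]
  have "(adj Q * Q) $$ (j,j) = 1" using c assms(2) by simp
  moreover have "(adj Q * Q) $$ (j,j) = (\<Sum>k<n. Q $$ (k,j) * cnj (Q $$ (k,j)))"
    using c(1) assms(2) by (auto simp: scalar_prod_def atLeast0LessThan mult.commute intro!: sum.cong)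
  ultimately have "(\<Sum>k<n. Q $$ (k,j) * cnj (Q $$ (k,j))) = 1" by simp
  moreover have "complex_of_real (\<Sum>k<n. (cmod (Q $$ (k,j)))\<^sup>2) = (\<Sum>k<n. Q $$ (k,j) * cnj (Q $$ (k,j)))"
    by (simp only: of_real_sum complex_norm_square)
  ultimately have "complex_of_real (\<Sum>k<n. (cmod (Q $$ (k,j)))\<^sup>2) = 1" by simp
  then show ?thesis using of_real_eq_1_iff by blast
qed

lemma trace_diag_form:
  assumes "Q \<in> carrier_mat n n"
  shows "Re (mtrace (diagm n (\<lambda>k. complex_of_real (y k)) * Q * diagm n (\<lambda>k. complex_of_real (w k)) * adj Q))
     = (\<Sum>k<n. \<Sum>j<n. y k * (cmod (Q $$ (k,j)))\<^sup>2 * w j)"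
proof -
  have "mtrace (diagm n (\<lambda>k. complex_of_real (y k)) * Q * diagm n (\<lambda>k. complex_of_real (w k)) * adj Q)
      = (\<Sum>k<n. \<Sum>j<n. (diagm n (\<lambda>k. complex_of_real (y k)) * Q * diagm n (\<lambda>k. complex_of_real (w k))) $$ (k,j) * adj Q $$ (j,k))"
    using assms by (intro mtrace_entries) auto
  also have "\<dots> = (\<Sum>k<n. \<Sum>j<n. complex_of_real (y k * (cmod (Q $$ (k,j)))\<^sup>2 * w j))"
  proof (intro sum.cong refl)
    fix k j assume k: "k \<in> {..<n}" and j: "j \<in> {..<n}"
    have e: "(diagm n (\<lambda>k. complex_of_real (y k)) * Q * diagm n (\<lambda>k. complex_of_real (w k))) $$ (k,j)
        = complex_of_real (y k) * Q $$ (k,j) * complex_of_real (w j)"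
    proof -
      have "(diagm n (\<lambda>k. complex_of_real (y k)) * Q * diagm n (\<lambda>k. complex_of_real (w k))) $$ (k,j)
          = (diagm n (\<lambda>k. complex_of_real (y k)) * Q) $$ (k,j) * complex_of_real (w j)"
        by (rule diag_right) (use assms k j in auto)
      also have "(diagm n (\<lambda>k. complex_of_real (y k)) * Q) $$ (k,j) = complex_of_real (y k) * Q $$ (k,j)"
        by (rule diag_left) (use assms k j in auto)
      finally show ?thesis .
    qed
    have a: "adj Q $$ (j,k) = cnj (Q $$ (k,j))" using assms k j by simp
    have b: "complex_of_real (y k * (cmod (Q $$ (k,j)))\<^sup>2 * w j) = complex_of_real (y k) * (Q $$ (k,j) * cnj (Q $$ (k,j))) * complex_of_real (w j)"
      by (simp only: of_real_mult complex_norm_square)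
    show "(diagm n (\<lambda>k. complex_of_real (y k)) * Q * diagm n (\<lambda>k. complex_of_real (w k))) $$ (k,j) * adj Q $$ (j,k)
       = complex_of_real (y k * (cmod (Q $$ (k,j)))\<^sup>2 * w j)"
      unfolding e a b by (simp only: mult_ac)
  qed
  finally show ?thesis by simp
qed

lemma g_form:
  assumes P: "unitary n P" and Q0: "unitary n Q0" and V: "unitary n V"
  shows "Re (mtrace (P * diagm n (\<lambda>k. complex_of_real (y k)) * adj P * V *
            (Q0 * diagm n (\<lambda>k. complex_of_real (w k)) * adj Q0) * adj V))
       = (\<Sum>k<n. \<Sum>j<n. y k * (cmod ((adj P * V * Q0) $$ (k,j)))\<^sup>2 * w j)"
proof -
  note c = unitaryD(1)[OF P] unitaryD(1)[OF Q0] unitaryD(1)[OF V]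
  define Dy where "Dy = diagm n (\<lambda>k. complex_of_real (y k))"
  define Dw where "Dw = diagm n (\<lambda>k. complex_of_real (w k))"
  have d: "Dy \<in> carrier_mat n n" "Dw \<in> carrier_mat n n" unfolding Dy_def Dw_def by simp_all
  define Z where "Z = Dy * (adj P * (V * (Q0 * (Dw * (adj Q0 * adj V)))))"
  have Zc: "Z \<in> carrier_mat n n" unfolding Z_def using c d by simp
  have "P * Dy * adj P * V * (Q0 * Dw * adj Q0) * adj V = P * Z"
    unfolding Z_def using c d by (simp add: assocR[of _ n])
  then have "mtrace (P * Dy * adj P * V * (Q0 * Dw * adj Q0) * adj V) = mtrace (Z * P)"
    using mtrace_comm[OF c(1) Zc] by simp
  also have "Z * P = Dy * (adj P * V * Q0) * Dw * adj (adj P * V * Q0)"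
    unfolding Z_def using c d by (simp add: assocR[of _ n] adj_mult[of _ n n _ n])
  finally have "mtrace (P * Dy * adj P * V * (Q0 * Dw * adj Q0) * adj V)
      = mtrace (Dy * (adj P * V * Q0) * Dw * adj (adj P * V * Q0))" .
  then have "Re (mtrace (P * Dy * adj P * V * (Q0 * Dw * adj Q0) * adj V))
      = Re (mtrace (Dy * (adj P * V * Q0) * Dw * adj (adj P * V * Q0)))" by simp
  also have "\<dots> = (\<Sum>k<n. \<Sum>j<n. y k * (cmod ((adj P * V * Q0) $$ (k,j)))\<^sup>2 * w j)"
    unfolding Dy_def Dw_def by (rule trace_diag_form) (use c in simp)
  finally show ?thesis unfolding Dy_def Dw_def .
qed

lemma g_min:
  assumes P: "unitary n P" and Q0: "unitary n Q0" and V: "unitary n V"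
    and ymono: "\<And>i j. i \<le> j \<Longrightarrow> j < n \<Longrightarrow> y i \<le> y j"
    and wanti: "\<And>i j. i \<le> j \<Longrightarrow> j < n \<Longrightarrow> w j \<le> w i"
  shows "(\<Sum>k<n. y k * w k) \<le> Re (mtrace (P * diagm n (\<lambda>k. complex_of_real (y k)) * adj P * V *
            (Q0 * diagm n (\<lambda>k. complex_of_real (w k)) * adj Q0) * adj V))"
proof -
  have U: "unitary n (adj P * V * Q0)" using P Q0 V by (intro unitary_mult unitary_adj)
  show ?thesis
    unfolding g_form[OF P Q0 V]
    by (rule rearrangement) (use unitary_row[OF U] unitary_col[OF U] ymono wanti in auto)
qed

lemma g_eq:
  assumes P: "unitary n P" and Q0: "unitary n Q0"
  shows "Re (mtrace (P * diagm n (\<lambda>k. complex_of_real (y k)) * adj P * (P * adj Q0) *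
            (Q0 * diagm n (\<lambda>k. complex_of_real (w k)) * adj Q0) * adj (P * adj Q0))) = (\<Sum>k<n. y k * w k)"
proof -
  have V: "unitary n (P * adj Q0)" using P Q0 by (intro unitary_mult unitary_adj)
  have "adj P * (P * adj Q0) * Q0 = 1\<^sub>m n"
    using P Q0 unitaryD[OF P] unitaryD[OF Q0] by (simp add: assocR[of _ n] cancel1)
  then have "Re (mtrace (P * diagm n (\<lambda>k. complex_of_real (y k)) * adj P * (P * adj Q0) *
            (Q0 * diagm n (\<lambda>k. complex_of_real (w k)) * adj Q0) * adj (P * adj Q0)))
      = (\<Sum>k<n. \<Sum>j<n. y k * (cmod ((1\<^sub>m n :: complex mat) $$ (k,j)))\<^sup>2 * w j)"
    using g_form[OF P Q0 V] by simp
  also have "\<dots> = (\<Sum>k<n. \<Sum>j<n. if j = k then y k * w k else 0)"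
    by (intro sum.cong refl) simp
  also have "\<dots> = (\<Sum>k<n. y k * w k)" by simp
  finally show ?thesis .
qed

lemma sup_max:
  assumes "\<And>V. unitary n V \<Longrightarrow> f V \<le> c" and "unitary n V0" and "f V0 = c"
  shows "Sup {f V | V. unitary n V} = (c::real)"
  by (rule cSup_eq_maximum) (use assms in auto)

lemma triple_trace:
  assumes "A \<in> carrier_mat n n" "B \<in> carrier_mat n n" "C \<in> carrier_mat n n"
  shows "(\<Sum>i<n. \<Sum>j<n. \<Sum>k<n. A $$ (i,j) * B $$ (j,k) * C $$ (k,i)) = mtrace (A * (B * C))"
proof -
  have "mtrace (A * (B * C)) = (\<Sum>i<n. \<Sum>j<n. A $$ (i,j) * (B * C) $$ (j,i))"
    using assms by (intro mtrace_entries) auto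
  also have "\<dots> = (\<Sum>i<n. \<Sum>j<n. \<Sum>k<n. A $$ (i,j) * B $$ (j,k) * C $$ (k,i))"
    using assms by (auto simp: scalar_prod_def atLeast0LessThan sum_distrib_left mult.assoc intro!: sum.cong)
  finally show ?thesis by simp
qed

lemma Re_mult_ofr: "Re (z * complex_of_real t) = Re z * t"
  by simp

lemma term_ident:
  fixes r a b cc :: real and R A B :: complex
  assumes "r \<noteq> 0"
  shows "Re (R * A * B) * ((1 - exp (- r * ((a + b) / 2 - cc))) / r)
     = Re (R * A * B) / r
       - Re ((complex_of_real (exp (- r * a / 2)) * R * complex_of_real (exp (- r * b / 2)))
             * (A * complex_of_real (exp (r * cc) / r)) * B)"
proof -
  have "- r * ((a + b) / 2 - cc) = - r * a / 2 + - r * b / 2 + r * cc" by (simp add: field_simps)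
  then have ex: "exp (- r * ((a + b) / 2 - cc)) = exp (- r * a / 2) * exp (- r * b / 2) * exp (r * cc)"
    by (simp only: exp_add)
  have "(complex_of_real (exp (- r * a / 2)) * R * complex_of_real (exp (- r * b / 2)))
             * (A * complex_of_real (exp (r * cc) / r)) * B
        = (R * A * B) * complex_of_real (exp (- r * a / 2) * exp (- r * b / 2) * (exp (r * cc) / r))"
    by (simp add: mult_ac)
  then have "Re ((complex_of_real (exp (- r * a / 2)) * R * complex_of_real (exp (- r * b / 2)))
             * (A * complex_of_real (exp (r * cc) / r)) * B)
        = Re (R * A * B) * (exp (- r * a / 2) * exp (- r * b / 2) * (exp (r * cc) / r))"
    by (simp only: Re_mult_ofr)
  then show ?thesis using assms unfolding ex by (simp add: field_simps)
qed

lemma exp_util_form: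
  assumes W: "unitary n W" and U: "unitary n U" and X: "X \<in> carrier_mat n n" and r: "r \<noteq> 0"
    and Edef: "E = W * diagm n (\<lambda>k. complex_of_real (exp (- r * \<epsilon> k / 2))) * adj W"
    and ydef: "y = (\<lambda>k. exp (r * \<epsilon> k) / r)"
  shows "exp_util n W \<epsilon> (\<lambda>w. (1 - exp (- r * w)) / r) X U
     = Re (mtrace X) / r - Re (mtrace (W * diagm n (\<lambda>k. complex_of_real (y k)) * adj W * U * (E * X * E) * adj U))"
proof -
  note c = unitaryD(1)[OF W] unitaryD(1)[OF U] X
  define De where "De = diagm n (\<lambda>k. complex_of_real (exp (- r * \<epsilon> k / 2)))"
  define Dy where "Dy = diagm n (\<lambda>k. complex_of_real (y k))"
  have d: "De \<in> carrier_mat n n" "Dy \<in> carrier_mat n n" unfolding De_def Dy_def by simp_all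
  define R where "R = adj W * X * W"
  define A1 where "A1 = adj W * adj U * W"
  define B1 where "B1 = adj W * U * W"
  define F where "F = De * R * De"
  define G where "G = A1 * Dy"
  have cR: "R \<in> carrier_mat n n" "A1 \<in> carrier_mat n n" "B1 \<in> carrier_mat n n"
    "F \<in> carrier_mat n n" "G \<in> carrier_mat n n"
    unfolding R_def A1_def B1_def F_def G_def using c d by simp_all
  have Fe: "F $$ (i,j) = complex_of_real (exp (- r * \<epsilon> i / 2)) * R $$ (i,j) * complex_of_real (exp (- r * \<epsilon> j / 2))"
    if "i < n" "j < n" for i j
  proof -
    have "F $$ (i,j) = (De * R) $$ (i,j) * complex_of_real (exp (- r * \<epsilon> j / 2))"
      unfolding F_def De_def by (rule diag_right) (use that cR c d in \<open>auto simp: De_def\<close>)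
    also have "(De * R) $$ (i,j) = complex_of_real (exp (- r * \<epsilon> i / 2)) * R $$ (i,j)"
      unfolding De_def by (rule diag_left) (use that cR in auto)
    finally show ?thesis .
  qed
  have Ge: "G $$ (j,k) = A1 $$ (j,k) * complex_of_real (exp (r * \<epsilon> k) / r)" if "j < n" "k < n" for j k
  proof -
    have "G $$ (j,k) = A1 $$ (j,k) * complex_of_real (y k)"
      unfolding G_def Dy_def by (rule diag_right) (use that cR in auto)
    then show ?thesis using ydef by simp
  qed
  have step1: "exp_util n W \<epsilon> (\<lambda>w. (1 - exp (- r * w)) / r) X U
      = (\<Sum>i<n. \<Sum>j<n. \<Sum>k<n. Re (R $$ (i,j) * A1 $$ (j,k) * B1 $$ (k,i)) / r
            - Re (F $$ (i,j) * G $$ (j,k) * B1 $$ (k,i)))"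
    unfolding exp_util_def melem_def R_def[symmetric] A1_def[symmetric] B1_def[symmetric]
  proof (intro sum.cong refl)
    fix i j k assume i: "i \<in> {..<n}" and j: "j \<in> {..<n}" and k: "k \<in> {..<n}"
    show "Re (R $$ (i, j) * A1 $$ (j, k) * B1 $$ (k, i)) * ((1 - exp (- r * ((\<epsilon> i + \<epsilon> j) / 2 - \<epsilon> k))) / r)
        = Re (R $$ (i,j) * A1 $$ (j,k) * B1 $$ (k,i)) / r - Re (F $$ (i,j) * G $$ (j,k) * B1 $$ (k,i))"
    proof -
      have f: "F $$ (i,j) = complex_of_real (exp (- r * \<epsilon> i / 2)) * R $$ (i,j) * complex_of_real (exp (- r * \<epsilon> j / 2))"
        using Fe i j by simp
      have g: "G $$ (j,k) = A1 $$ (j,k) * complex_of_real (exp (r * \<epsilon> k) / r)" using Ge j k by simp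
      show ?thesis unfolding f g by (rule term_ident[OF r])
    qed
  qed
  also have "\<dots> = Re (\<Sum>i<n. \<Sum>j<n. \<Sum>k<n. R $$ (i,j) * A1 $$ (j,k) * B1 $$ (k,i)) / r
      - Re (\<Sum>i<n. \<Sum>j<n. \<Sum>k<n. F $$ (i,j) * G $$ (j,k) * B1 $$ (k,i))"
    by (simp only: Re_sum sum_subtractf sum_divide_distrib)
  also have "\<dots> = Re (mtrace (R * (A1 * B1))) / r - Re (mtrace (F * (G * B1)))"
    using cR by (simp add: triple_trace)
  also have "mtrace (R * (A1 * B1)) = mtrace X"
  proof -
    have "R * (A1 * B1) = adj W * (X * W)"
      unfolding R_def A1_def B1_def using c W U by (simp add: assocR[of _ n] cancel1 cancel2)
    then have "mtrace (R * (A1 * B1)) = mtrace (X * W * adj W)"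
      using mtrace_comm[of "adj W" n n "X * W"] c by simp
    also have "X * W * adj W = X" using c unitaryD[OF W] by (simp add: assocR[of _ n])
    finally show ?thesis .
  qed
  also have "mtrace (F * (G * B1)) = mtrace (W * Dy * adj W * U * (E * X * E) * adj U)"
  proof -
    define C1 where "C1 = W * (Dy * (adj W * (U * W)))"
    define C2 where "C2 = De * (adj W * (X * (W * (De * (adj W * adj U)))))"
    have cc: "C1 \<in> carrier_mat n n" "C2 \<in> carrier_mat n n" unfolding C1_def C2_def using c d by simp_all
    have "W * Dy * adj W * U * (E * X * E) * adj U = C1 * C2"
      unfolding C1_def C2_def Edef De_def[symmetric] using c d by (simp add: assocR[of _ n])
    moreover have "F * (G * B1) = C2 * C1"
      unfolding C1_def C2_def F_def G_def R_def A1_def B1_def using c d by (simp add: assocR[of _ n])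
    ultimately show ?thesis using mtrace_comm[OF cc(1) cc(2)] by simp
  qed
  finally show ?thesis unfolding Dy_def .
qed

lemma y_mono:
  fixes \<epsilon> :: "nat \<Rightarrow> real"
  assumes r: "r \<noteq> 0" and eps: "\<And>i j. i < j \<Longrightarrow> j < n \<Longrightarrow> \<epsilon> i < \<epsilon> j"
    and ij: "i \<le> j" "j < n"
  shows "exp (r * \<epsilon> i) / r \<le> exp (r * \<epsilon> j) / r"
proof (cases "i = j")
  case True then show ?thesis by simp
next
  case False
  then have e: "\<epsilon> i < \<epsilon> j" using eps ij by simp
  show ?thesis
  proof (cases "r > 0")
    case True
    then have "exp (r * \<epsilon> i) \<le> exp (r * \<epsilon> j)" using e by simp
    then show ?thesis using True by (simp add: divide_right_mono)
  next
    case False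
    then have rn: "r < 0" using r by simp
    then have "r * \<epsilon> j \<le> r * \<epsilon> i" using e by (simp add: mult_left_mono_neg)
    then have "exp (r * \<epsilon> j) \<le> exp (r * \<epsilon> i)" by simp
    then show ?thesis using rn by (simp add: divide_right_mono_neg)
  qed
qed

lemma opt_util_form:
  assumes W: "unitary n W" and X: "X \<in> carrier_mat n n" and r: "r \<noteq> 0"
    and Edef: "E = W * diagm n (\<lambda>k. complex_of_real (exp (- r * \<epsilon> k / 2))) * adj W"
    and ydef: "y = (\<lambda>k. exp (r * \<epsilon> k) / r)"
    and ymono: "\<And>i j. i \<le> j \<Longrightarrow> j < n \<Longrightarrow> y i \<le> y j"
    and Q0: "unitary n Q0" and EXE: "E * X * E = Q0 * diagm n (\<lambda>k. complex_of_real (w k)) * adj Q0"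
    and wanti: "\<And>i j. i \<le> j \<Longrightarrow> j < n \<Longrightarrow> w j \<le> w i"
  shows "opt_util n W \<epsilon> (\<lambda>w. (1 - exp (- r * w)) / r) X = Re (mtrace X) / r - (\<Sum>k<n. y k * w k)"
  unfolding opt_util_def
proof (rule sup_max)
  fix V assume V: "unitary n V"
  show "exp_util n W \<epsilon> (\<lambda>w. (1 - exp (- r * w)) / r) X V \<le> Re (mtrace X) / r - (\<Sum>k<n. y k * w k)"
    unfolding exp_util_form[OF W V X r Edef ydef] EXE
    using g_min[OF W Q0 V ymono wanti] by simp
next
  show "unitary n (W * adj Q0)" using W Q0 by (intro unitary_mult unitary_adj)
  show "exp_util n W \<epsilon> (\<lambda>w. (1 - exp (- r * w)) / r) X (W * adj Q0) = Re (mtrace X) / r - (\<Sum>k<n. y k * w k)"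
    unfolding exp_util_form[OF W \<open>unitary n (W * adj Q0)\<close> X r Edef ydef] EXE
    using g_eq[OF W Q0] by simp
qed

lemma trace_KX:
  assumes P: "unitary n P" and Q0: "unitary n Q0"
  shows "Re (mtrace (P * diagm n (\<lambda>k. complex_of_real (y k)) * adj P * (Q0 * diagm n (\<lambda>k. complex_of_real (w k)) * adj Q0)))
     = (\<Sum>k<n. \<Sum>j<n. y k * (cmod ((adj P * Q0) $$ (k,j)))\<^sup>2 * w j)"
proof -
  have "P * diagm n (\<lambda>k. complex_of_real (y k)) * adj P * (Q0 * diagm n (\<lambda>k. complex_of_real (w k)) * adj Q0)
      = P * diagm n (\<lambda>k. complex_of_real (y k)) * adj P * 1\<^sub>m n * (Q0 * diagm n (\<lambda>k. complex_of_real (w k)) * adj Q0) * adj (1\<^sub>m n)"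
    using unitaryD(1)[OF P] unitaryD(1)[OF Q0] by simp
  moreover have "adj P * 1\<^sub>m n * Q0 = adj P * Q0" using unitaryD(1)[OF P] by simp
  ultimately show ?thesis using g_form[OF P Q0 unitary_one, of y w] by simp
qed

lemma ergo_form:
  assumes P: "unitary n P" and Q0: "unitary n Q0"
    and ymono: "\<And>i j. i \<le> j \<Longrightarrow> j < n \<Longrightarrow> y i \<le> y j"
    and wanti: "\<And>i j. i \<le> j \<Longrightarrow> j < n \<Longrightarrow> w j \<le> w i"
  shows "ergotropy n (P * diagm n (\<lambda>k. complex_of_real (y k)) * adj P) (Q0 * diagm n (\<lambda>k. complex_of_real (w k)) * adj Q0)
     = Re (mtrace (P * diagm n (\<lambda>k. complex_of_real (y k)) * adj P * (Q0 * diagm n (\<lambda>k. complex_of_real (w k)) * adj Q0)))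
       - (\<Sum>k<n. y k * w k)"
  unfolding ergotropy_def
proof (rule sup_max)
  fix V assume V: "unitary n V"
  show "Re (mtrace (P * diagm n (\<lambda>k. complex_of_real (y k)) * adj P * (Q0 * diagm n (\<lambda>k. complex_of_real (w k)) * adj Q0)))
      - Re (mtrace (P * diagm n (\<lambda>k. complex_of_real (y k)) * adj P * V * (Q0 * diagm n (\<lambda>k. complex_of_real (w k)) * adj Q0) * adj V))
      \<le> Re (mtrace (P * diagm n (\<lambda>k. complex_of_real (y k)) * adj P * (Q0 * diagm n (\<lambda>k. complex_of_real (w k)) * adj Q0)))
       - (\<Sum>k<n. y k * w k)"
    using g_min[OF P Q0 V ymono wanti] by simp
next
  show "unitary n (P * adj Q0)" using P Q0 by (intro unitary_mult unitary_adj)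
  show "Re (mtrace (P * diagm n (\<lambda>k. complex_of_real (y k)) * adj P * (Q0 * diagm n (\<lambda>k. complex_of_real (w k)) * adj Q0)))
      - Re (mtrace (P * diagm n (\<lambda>k. complex_of_real (y k)) * adj P * (P * adj Q0) * (Q0 * diagm n (\<lambda>k. complex_of_real (w k)) * adj Q0) * adj (P * adj Q0)))
      = Re (mtrace (P * diagm n (\<lambda>k. complex_of_real (y k)) * adj P * (Q0 * diagm n (\<lambda>k. complex_of_real (w k)) * adj Q0)))
       - (\<Sum>k<n. y k * w k)"
    using g_eq[OF P Q0] by simp
qed

lemma sum_pair: "(\<Sum>s<(m::nat)*k. f s) = (\<Sum>i<m. \<Sum>b<k. f (i*k+b))"
proof -
  have "(\<Sum>s<m*k. f s) = (\<Sum>i<m. sum f {i*k..<i*k+k})" by (simp only: sum.nat_group)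
  also have "\<dots> = (\<Sum>i<m. \<Sum>b<k. f (i*k+b))"
  proof (rule sum.cong[OF refl])
    fix i
    show "sum f {i*k..<i*k+k} = (\<Sum>b<k. f (i*k+b))"
      using sum.atLeastLessThan_shift_0[of f "i*k" "i*k+k"] by (simp add: atLeast0LessThan comp_def)
  qed
  finally show ?thesis .
qed

lemma divmod_pair[simp]: "b < (k::nat) \<Longrightarrow> (i*k+b) div k = i" "b < (k::nat) \<Longrightarrow> (i*k+b) mod k = b"
  by simp_all

lemma pair_less: "i < m \<Longrightarrow> b < (k::nat) \<Longrightarrow> i*k+b < m*k"
proof -
  assume "i < m" "b < k"
  then have "i*k+b < i*k+k" by simp
  also have "\<dots> = (i+1)*k" by simp
  also have "\<dots> \<le> m*k" using \<open>i < m\<close> by (intro mult_right_mono) auto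
  finally show ?thesis .
qed

lemma proj_carrier[simp]: "proj_A dS dA B a \<in> carrier_mat (dS*dA) (dS*dA)"
  by (simp add: proj_A_def)

lemma proj_dims[simp]: "dim_row (proj_A dS dA B a) = dS*dA" "dim_col (proj_A dS dA B a) = dS*dA"
  by (simp_all add: proj_A_def)

lemma proj_entry:
  assumes "i < dS" "b < dA" "i' < dS" "b' < dA"
  shows "proj_A dS dA B a $$ (i*dA+b, i'*dA+b') = (if i = i' then B $$ (b,a) * cnj (B $$ (b',a)) else 0)"
  using assms pair_less[of i dS b dA] pair_less[of i' dS b' dA] by (simp add: proj_A_def)

definition Mf :: "nat \<Rightarrow> complex mat \<Rightarrow> complex mat \<Rightarrow> nat \<Rightarrow> nat \<Rightarrow> nat \<Rightarrow> complex" where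
  "Mf dA B \<rho> a i j = (\<Sum>b<dA. \<Sum>b'<dA. cnj (B $$ (b,a)) * \<rho> $$ (i*dA+b, j*dA+b') * B $$ (b',a))"

lemma proj_left:
  assumes Y: "Y \<in> carrier_mat (dS*dA) (dS*dA)" and i: "i < dS" and b: "b < dA" and q: "q < dS*dA"
  shows "(proj_A dS dA B a * Y) $$ (i*dA+b, q) = B $$ (b,a) * (\<Sum>b1<dA. cnj (B $$ (b1,a)) * Y $$ (i*dA+b1, q))"
proof -
  have "(proj_A dS dA B a * Y) $$ (i*dA+b, q) = (\<Sum>s<dS*dA. proj_A dS dA B a $$ (i*dA+b, s) * Y $$ (s, q))"
    using carrier_matD[OF Y] q pair_less[OF i b] by (simp add: scalar_prod_def atLeast0LessThan)
  also have "\<dots> = (\<Sum>i1<dS. \<Sum>b1<dA. proj_A dS dA B a $$ (i*dA+b, i1*dA+b1) * Y $$ (i1*dA+b1, q))"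
    by (rule sum_pair)
  also have "\<dots> = (\<Sum>i1<dS. if i1 = i then (\<Sum>b1<dA. B $$ (b,a) * cnj (B $$ (b1,a)) * Y $$ (i*dA+b1, q)) else 0)"
    using i b by (intro sum.cong refl) (auto simp: proj_entry)
  also have "\<dots> = (\<Sum>b1<dA. B $$ (b,a) * cnj (B $$ (b1,a)) * Y $$ (i*dA+b1, q))"
    using i by simp
  also have "\<dots> = B $$ (b,a) * (\<Sum>b1<dA. cnj (B $$ (b1,a)) * Y $$ (i*dA+b1, q))"
    by (simp add: sum_distrib_left mult.assoc)
  finally show ?thesis .
qed

lemma proj_right:
  assumes Y: "Y \<in> carrier_mat (dS*dA) (dS*dA)" and j: "j < dS" and b: "b < dA" and p: "p < dS*dA"
  shows "(Y * proj_A dS dA B a) $$ (p, j*dA+b) = (\<Sum>b2<dA. Y $$ (p, j*dA+b2) * B $$ (b2,a)) * cnj (B $$ (b,a))"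
proof -
  have "(Y * proj_A dS dA B a) $$ (p, j*dA+b) = (\<Sum>s<dS*dA. Y $$ (p, s) * proj_A dS dA B a $$ (s, j*dA+b))"
    using carrier_matD[OF Y] p pair_less[OF j b] by (simp add: scalar_prod_def atLeast0LessThan)
  also have "\<dots> = (\<Sum>j1<dS. \<Sum>b2<dA. Y $$ (p, j1*dA+b2) * proj_A dS dA B a $$ (j1*dA+b2, j*dA+b))"
    by (rule sum_pair)
  also have "\<dots> = (\<Sum>j1<dS. if j1 = j then (\<Sum>b2<dA. Y $$ (p, j*dA+b2) * (B $$ (b2,a) * cnj (B $$ (b,a)))) else 0)"
    using j b by (intro sum.cong refl) (auto simp: proj_entry)
  also have "\<dots> = (\<Sum>b2<dA. Y $$ (p, j*dA+b2) * (B $$ (b2,a) * cnj (B $$ (b,a))))"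
    using j by simp
  also have "\<dots> = (\<Sum>b2<dA. Y $$ (p, j*dA+b2) * B $$ (b2,a)) * cnj (B $$ (b,a))"
    by (simp add: sum_distrib_right mult.assoc)
  finally show ?thesis .
qed

lemma col_norm:
  assumes "unitary dA B" "a < dA"
  shows "(\<Sum>b<dA. B $$ (b,a) * cnj (B $$ (b,a))) = 1"
proof -
  note c = unitaryD[OF assms(1)]
  have "(adj B * B) $$ (a,a) = 1" using c assms(2) by simp
  moreover have "(adj B * B) $$ (a,a) = (\<Sum>b<dA. B $$ (b,a) * cnj (B $$ (b,a)))"
    using c(1) assms(2) by (auto simp: scalar_prod_def atLeast0LessThan mult.commute intro!: sum.cong)
  ultimately show ?thesis by simp
qed

lemma row_orth:
  assumes "unitary dA B" "b < dA" "b' < dA"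
  shows "(\<Sum>a<dA. B $$ (b',a) * cnj (B $$ (b,a))) = (if b' = b then 1 else 0)"
proof -
  note c = unitaryD[OF assms(1)]
  have "(B * adj B) $$ (b',b) = (if b' = b then 1 else 0)" using c assms by simp
  moreover have "(B * adj B) $$ (b',b) = (\<Sum>a<dA. B $$ (b',a) * cnj (B $$ (b,a)))"
    using c(1) assms by (auto simp: scalar_prod_def atLeast0LessThan intro!: sum.cong)
  ultimately show ?thesis by simp
qed

lemma ptrace_Mf:
  assumes B: "unitary dA B" and a: "a < dA" and R: "\<rho> \<in> carrier_mat (dS*dA) (dS*dA)"
  shows "ptrace_A dS dA (proj_A dS dA B a * \<rho> * proj_A dS dA B a) = mat dS dS (\<lambda>(i,j). Mf dA B \<rho> a i j)"
proof (rule eq_matI)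
  fix i j assume "i < dim_row (mat dS dS (\<lambda>(i,j). Mf dA B \<rho> a i j))" "j < dim_col (mat dS dS (\<lambda>(i,j). Mf dA B \<rho> a i j))"
  then have i: "i < dS" and j: "j < dS" by auto
  let ?P = "proj_A dS dA B a"
  have PR: "?P * \<rho> \<in> carrier_mat (dS*dA) (dS*dA)" using R by simp
  have e: "(?P * \<rho> * ?P) $$ (i*dA+b, j*dA+b) = B $$ (b,a) * cnj (B $$ (b,a)) * Mf dA B \<rho> a i j"
    if b: "b < dA" for b
  proof -
    have "(?P * \<rho> * ?P) $$ (i*dA+b, j*dA+b) = (\<Sum>b2<dA. (?P * \<rho>) $$ (i*dA+b, j*dA+b2) * B $$ (b2,a)) * cnj (B $$ (b,a))"
      by (rule proj_right[OF PR j b pair_less[OF i b]])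
    also have "(\<Sum>b2<dA. (?P * \<rho>) $$ (i*dA+b, j*dA+b2) * B $$ (b2,a))
        = (\<Sum>b2<dA. B $$ (b,a) * (\<Sum>b1<dA. cnj (B $$ (b1,a)) * \<rho> $$ (i*dA+b1, j*dA+b2)) * B $$ (b2,a))"
      by (rule sum.cong[OF refl]) (simp add: proj_left[OF R i b pair_less[OF j]])
    also have "\<dots> = (\<Sum>b2<dA. \<Sum>b1<dA. B $$ (b,a) * (cnj (B $$ (b1,a)) * \<rho> $$ (i*dA+b1, j*dA+b2) * B $$ (b2,a)))"
      by (simp add: sum_distrib_left sum_distrib_right mult_ac)
    also have "\<dots> = (\<Sum>b1<dA. \<Sum>b2<dA. B $$ (b,a) * (cnj (B $$ (b1,a)) * \<rho> $$ (i*dA+b1, j*dA+b2) * B $$ (b2,a)))"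
      by (rule sum.swap)
    also have "\<dots> = B $$ (b,a) * Mf dA B \<rho> a i j"
      by (simp add: Mf_def sum_distrib_left)
    finally show ?thesis by (simp add: mult_ac)
  qed
  have "ptrace_A dS dA (?P * \<rho> * ?P) $$ (i,j) = (\<Sum>b<dA. (?P * \<rho> * ?P) $$ (i*dA+b, j*dA+b))"
    using i j by (simp add: ptrace_A_def)
  also have "\<dots> = (\<Sum>b<dA. B $$ (b,a) * cnj (B $$ (b,a))) * Mf dA B \<rho> a i j"
    by (simp add: e sum_distrib_right)
  also have "\<dots> = Mf dA B \<rho> a i j" using col_norm[OF B a] by simp
  finally show "ptrace_A dS dA (?P * \<rho> * ?P) $$ (i,j) = mat dS dS (\<lambda>(i,j). Mf dA B \<rho> a i j) $$ (i,j)"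
    using i j by simp
qed (simp_all add: ptrace_A_def)

lemma prob_Mf:
  assumes R: "\<rho> \<in> carrier_mat (dS*dA) (dS*dA)"
  shows "prob_a dS dA B \<rho> a = Re (\<Sum>i<dS. Mf dA B \<rho> a i i)"
proof -
  let ?P = "proj_A dS dA B a"
  have "mtrace (?P * \<rho>) = (\<Sum>p<dS*dA. (?P * \<rho>) $$ (p,p))"
    by (simp add: mtrace_def)
  also have "\<dots> = (\<Sum>i<dS. \<Sum>b<dA. (?P * \<rho>) $$ (i*dA+b, i*dA+b))" by (rule sum_pair)
  also have "\<dots> = (\<Sum>i<dS. \<Sum>b<dA. B $$ (b,a) * (\<Sum>b1<dA. cnj (B $$ (b1,a)) * \<rho> $$ (i*dA+b1, i*dA+b)))"
    by (intro sum.cong refl) (simp add: proj_left[OF R _ _ pair_less])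
  also have "\<dots> = (\<Sum>i<dS. \<Sum>b<dA. \<Sum>b1<dA. cnj (B $$ (b1,a)) * \<rho> $$ (i*dA+b1, i*dA+b) * B $$ (b,a))"
    by (simp add: sum_distrib_left mult_ac)
  also have "\<dots> = (\<Sum>i<dS. Mf dA B \<rho> a i i)"
    unfolding Mf_def by (rule sum.cong[OF refl]) (rule sum.swap)
  finally show ?thesis by (simp add: prob_a_def)
qed

lemma sum_Mf:
  assumes B: "unitary dA B" and i: "i < dS" and j: "j < dS"
  shows "(\<Sum>a<dA. Mf dA B \<rho> a i j) = ptrace_A dS dA \<rho> $$ (i,j)"
proof -
  have "(\<Sum>a<dA. Mf dA B \<rho> a i j) = (\<Sum>a<dA. \<Sum>b<dA. \<Sum>b'<dA. cnj (B $$ (b,a)) * \<rho> $$ (i*dA+b, j*dA+b') * B $$ (b',a))"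
    by (simp add: Mf_def)
  also have "\<dots> = (\<Sum>b<dA. \<Sum>a<dA. \<Sum>b'<dA. cnj (B $$ (b,a)) * \<rho> $$ (i*dA+b, j*dA+b') * B $$ (b',a))"
    by (rule sum.swap)
  also have "\<dots> = (\<Sum>b<dA. \<Sum>b'<dA. \<Sum>a<dA. cnj (B $$ (b,a)) * \<rho> $$ (i*dA+b, j*dA+b') * B $$ (b',a))"
    by (rule sum.cong[OF refl]) (rule sum.swap)
  also have "\<dots> = (\<Sum>b<dA. \<Sum>b'<dA. \<rho> $$ (i*dA+b, j*dA+b') * (\<Sum>a<dA. B $$ (b',a) * cnj (B $$ (b,a))))"
    by (simp add: sum_distrib_left mult_ac)
  also have "\<dots> = (\<Sum>b<dA. \<Sum>b'<dA. if b' = b then \<rho> $$ (i*dA+b, j*dA+b') else 0)"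
    by (intro sum.cong refl) (simp add: row_orth[OF B])
  also have "\<dots> = (\<Sum>b<dA. \<rho> $$ (i*dA+b, j*dA+b))" by simp
  also have "\<dots> = ptrace_A dS dA \<rho> $$ (i,j)" using i j by (simp add: ptrace_A_def)
  finally show ?thesis .
qed

lemma herm_Mf:
  assumes R: "\<rho> \<in> carrier_mat (dS*dA) (dS*dA)" and H: "adj \<rho> = \<rho>" and i: "i < dS" and j: "j < dS"
  shows "cnj (Mf dA B \<rho> a i j) = Mf dA B \<rho> a j i"
proof -
  have h: "cnj (\<rho> $$ (p,q)) = \<rho> $$ (q,p)" if "p < dS*dA" "q < dS*dA" for p q
  proof -
    have "\<rho> $$ (q,p) = adj \<rho> $$ (q,p)" using H by simp
    also have "\<dots> = cnj (\<rho> $$ (p,q))" using R that by simp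
    finally show ?thesis by simp
  qed
  have "cnj (Mf dA B \<rho> a i j) = (\<Sum>b<dA. \<Sum>b'<dA. cnj (B $$ (b',a)) * \<rho> $$ (j*dA+b', i*dA+b) * B $$ (b,a))"
    unfolding Mf_def cnj_sum
  proof (intro sum.cong refl)
    fix b b' assume b: "b \<in> {..<dA}" and b': "b' \<in> {..<dA}"
    have hh: "cnj (\<rho> $$ (i*dA+b, j*dA+b')) = \<rho> $$ (j*dA+b', i*dA+b)"
      by (rule h) (use pair_less i j b b' in auto)
    have "cnj (cnj (B $$ (b,a)) * \<rho> $$ (i*dA+b, j*dA+b') * B $$ (b',a))
        = B $$ (b,a) * cnj (\<rho> $$ (i*dA+b, j*dA+b')) * cnj (B $$ (b',a))" by simp
    also have "\<dots> = B $$ (b,a) * \<rho> $$ (j*dA+b', i*dA+b) * cnj (B $$ (b',a))" by (simp only: hh)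
    finally show "cnj (cnj (B $$ (b,a)) * \<rho> $$ (i*dA+b, j*dA+b') * B $$ (b',a))
        = cnj (B $$ (b',a)) * \<rho> $$ (j*dA+b', i*dA+b) * B $$ (b,a)" by (simp only: mult_ac)
  qed
  also have "\<dots> = (\<Sum>b'<dA. \<Sum>b<dA. cnj (B $$ (b',a)) * \<rho> $$ (j*dA+b', i*dA+b) * B $$ (b,a))"
    by (rule sum.swap)
  finally show ?thesis by (simp add: Mf_def)
qed

lemma psd_Mf:
  assumes P: "psd (dS*dA) \<rho>"
  shows "0 \<le> Re (\<Sum>i<dS. \<Sum>j<dS. cnj (v i) * Mf dA B \<rho> a i j * v j)"
proof -
  define w where "w p = v (p div dA) * B $$ (p mod dA, a)" for p
  have "0 \<le> Re (\<Sum>p<dS*dA. \<Sum>q<dS*dA. cnj (w p) * \<rho> $$ (p,q) * w q)"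
    using P by (simp add: psd_def)
  also have "(\<Sum>p<dS*dA. \<Sum>q<dS*dA. cnj (w p) * \<rho> $$ (p,q) * w q)
      = (\<Sum>i<dS. \<Sum>b<dA. \<Sum>j<dS. \<Sum>b'<dA. cnj (w (i*dA+b)) * \<rho> $$ (i*dA+b, j*dA+b') * w (j*dA+b'))"
    by (simp only: sum_pair)
  also have "\<dots> = (\<Sum>i<dS. \<Sum>b<dA. \<Sum>j<dS. \<Sum>b'<dA. cnj (v i) * (cnj (B $$ (b,a)) * \<rho> $$ (i*dA+b, j*dA+b') * B $$ (b',a)) * v j)"
    by (intro sum.cong refl) (simp add: w_def mult_ac)
  also have "\<dots> = (\<Sum>i<dS. \<Sum>j<dS. \<Sum>b<dA. \<Sum>b'<dA. cnj (v i) * (cnj (B $$ (b,a)) * \<rho> $$ (i*dA+b, j*dA+b') * B $$ (b',a)) * v j)"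
    by (rule sum.cong[OF refl]) (rule sum.swap)
  also have "\<dots> = (\<Sum>i<dS. \<Sum>j<dS. cnj (v i) * Mf dA B \<rho> a i j * v j)"
    by (simp add: Mf_def sum_distrib_left sum_distrib_right)
  finally show ?thesis .
qed

lemma sum_two:
  fixes g :: "nat \<Rightarrow> complex"
  assumes "i < n" "j < n" "i \<noteq> j"
  shows "(\<Sum>l<n. g l * (if l = i then 1 else if l = j then t else 0)) = g i + g j * t"
proof -
  have "(\<Sum>l<n. g l * (if l = i then 1 else if l = j then t else 0))
      = (\<Sum>l<n. (if l = i then g l else 0) + (if l = j then g l * t else 0))"
    using assms by (intro sum.cong refl) auto
  also have "\<dots> = g i + g j * t" using assms by (simp add: sum.distrib)
  finally show ?thesis .
qed

lemma sum_two':
  fixes g :: "nat \<Rightarrow> complex"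
  assumes "i < n" "j < n" "i \<noteq> j"
  shows "(\<Sum>l<n. cnj (if l = i then 1 else if l = j then t else 0) * g l) = g i + cnj t * g j"
proof -
  have "(\<Sum>l<n. cnj (if l = i then 1 else if l = j then t else 0) * g l)
      = (\<Sum>l<n. (if l = i then g l else 0) + (if l = j then cnj t * g l else 0))"
    using assms by (intro sum.cong refl) auto
  also have "\<dots> = g i + cnj t * g j" using assms by (simp add: sum.distrib)
  finally show ?thesis .
qed

lemma psd_zero:
  fixes f :: "nat \<Rightarrow> nat \<Rightarrow> complex"
  assumes herm: "\<And>i j. i < n \<Longrightarrow> j < n \<Longrightarrow> cnj (f i j) = f j i"
    and psd: "\<And>v. 0 \<le> Re (\<Sum>i<n. \<Sum>j<n. cnj (v i) * f i j * v j)"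
    and tr: "Re (\<Sum>i<n. f i i) \<le> 0"
    and i: "i < n" and j: "j < n"
  shows "f i j = 0"
proof -
  have diag_nn: "0 \<le> Re (f k k)" if k: "k < n" for k
  proof -
    define v where "v = (\<lambda>l. if l = k then (1::complex) else 0)"
    have "(\<Sum>i<n. \<Sum>j<n. cnj (v i) * f i j * v j) = (\<Sum>i<n. cnj (v i) * f i k)"
      unfolding v_def by (intro sum.cong refl) (simp add: k if_distrib cong: if_cong)
    also have "\<dots> = (\<Sum>i<n. if i = k then f i k else 0)"
      by (intro sum.cong refl) (simp add: v_def)
    also have "\<dots> = f k k" using k by simp
    finally show ?thesis using psd[of v] by simp
  qed
  have diag0: "f k k = 0" if k: "k < n" for k
  proof -
    have le: "(\<Sum>i<n. Re (f i i)) \<le> 0" using tr by simp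
    have ge: "0 \<le> (\<Sum>i<n. Re (f i i))" by (rule sum_nonneg) (use diag_nn in auto)
    have s0: "(\<Sum>i<n. Re (f i i)) = 0" using le ge by linarith
    have "\<forall>x\<in>{..<n}. Re (f x x) = 0"
      using iffD1[OF sum_nonneg_eq_0_iff[where f = "\<lambda>i. Re (f i i)" and A = "{..<n}", OF finite_lessThan] s0] diag_nn by blast
    then have "Re (f k k) = 0" using k by blast
    moreover have "Im (f k k) = 0"
    proof -
      have "Im (cnj (f k k)) = Im (f k k)" using herm[OF k k] by simp
      then show ?thesis by simp
    qed
    ultimately show ?thesis by (simp add: complex_eq_iff)
  qed
  show ?thesis
  proof (cases "i = j")
    case True then show ?thesis using diag0 i by simp
  next
    case False
    define t where "t = - cnj (f i j)"
    define v where "v = (\<lambda>l. if l = i then (1::complex) else if l = j then t else 0)"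
    have "(\<Sum>k<n. \<Sum>l<n. cnj (v k) * f k l * v l) = (\<Sum>k<n. cnj (v k) * (f k i + f k j * t))"
    proof (intro sum.cong refl)
      fix k assume "k \<in> {..<n}"
      have "(\<Sum>l<n. cnj (v k) * f k l * v l) = cnj (v k) * (\<Sum>l<n. f k l * v l)"
        by (simp add: sum_distrib_left mult.assoc)
      also have "(\<Sum>l<n. f k l * v l) = f k i + f k j * t"
        unfolding v_def by (rule sum_two[OF i j False])
      finally show "(\<Sum>l<n. cnj (v k) * f k l * v l) = cnj (v k) * (f k i + f k j * t)" .
    qed
    also have "\<dots> = (f i i + f i j * t) + cnj t * (f j i + f j j * t)"
      unfolding v_def by (rule sum_two'[OF i j False])
    also have "\<dots> = f i j * t + cnj t * cnj (f i j)"
      using diag0[OF i] diag0[OF j] herm[OF i j] by simp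
    also have "\<dots> = - 2 * (f i j * cnj (f i j))"
      unfolding t_def by (simp add: algebra_simps)
    also have "\<dots> = - 2 * complex_of_real ((cmod (f i j))\<^sup>2)"
      by (simp only: complex_norm_square[symmetric])
    finally have "0 \<le> Re (- 2 * complex_of_real ((cmod (f i j))\<^sup>2))" using psd[of v] by simp
    then have "0 \<le> - (2 * (cmod (f i j))\<^sup>2)" by simp
    then have "(cmod (f i j))\<^sup>2 \<le> 0" by simp
    then have "cmod (f i j) = 0" by (metis norm_ge_zero power2_less_eq_zero_iff)
    then show ?thesis by simp
  qed
qed

lemma ergo_explicit:
  assumes P: "unitary n P" and Q0: "unitary n Q0"
    and ymono: "\<And>i j. i \<le> j \<Longrightarrow> j < n \<Longrightarrow> y i \<le> y j"
    and wanti: "\<And>i j. i \<le> j \<Longrightarrow> j < n \<Longrightarrow> w j \<le> w i"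
  shows "ergotropy n (P * diagm n (\<lambda>k. complex_of_real (y k)) * adj P) (Q0 * diagm n (\<lambda>k. complex_of_real (w k)) * adj Q0)
      = (\<Sum>k<n. \<Sum>j<n. w j * ((cmod ((adj P * Q0) $$ (k,j)))\<^sup>2 - (if j = k then 1 else 0)) * y k)"
    and "0 \<le> ergotropy n (P * diagm n (\<lambda>k. complex_of_real (y k)) * adj P) (Q0 * diagm n (\<lambda>k. complex_of_real (w k)) * adj Q0)"
proof -
  have U: "unitary n (adj P * Q0)" using P Q0 by (intro unitary_mult unitary_adj)
  have e: "ergotropy n (P * diagm n (\<lambda>k. complex_of_real (y k)) * adj P) (Q0 * diagm n (\<lambda>k. complex_of_real (w k)) * adj Q0)
      = (\<Sum>k<n. \<Sum>j<n. y k * (cmod ((adj P * Q0) $$ (k,j)))\<^sup>2 * w j) - (\<Sum>k<n. y k * w k)"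
    using ergo_form[OF P Q0 ymono wanti] trace_KX[OF P Q0, of y w] by simp
  have r: "(\<Sum>k<n. y k * w k) \<le> (\<Sum>k<n. \<Sum>j<n. y k * (cmod ((adj P * Q0) $$ (k,j)))\<^sup>2 * w j)"
    by (rule rearrangement) (use unitary_row[OF U] unitary_col[OF U] ymono wanti in auto)
  show "0 \<le> ergotropy n (P * diagm n (\<lambda>k. complex_of_real (y k)) * adj P) (Q0 * diagm n (\<lambda>k. complex_of_real (w k)) * adj Q0)"
    using e r by simp
  have "(\<Sum>k<n. \<Sum>j<n. w j * ((cmod ((adj P * Q0) $$ (k,j)))\<^sup>2 - (if j = k then 1 else 0)) * y k)
      = (\<Sum>k<n. \<Sum>j<n. y k * (cmod ((adj P * Q0) $$ (k,j)))\<^sup>2 * w j - (if j = k then y k * w k else 0))"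
    by (intro sum.cong refl) (auto simp: algebra_simps)
  also have "\<dots> = (\<Sum>k<n. \<Sum>j<n. y k * (cmod ((adj P * Q0) $$ (k,j)))\<^sup>2 * w j) - (\<Sum>k<n. y k * w k)"
    by (simp add: sum_subtractf)
  finally show "ergotropy n (P * diagm n (\<lambda>k. complex_of_real (y k)) * adj P) (Q0 * diagm n (\<lambda>k. complex_of_real (w k)) * adj Q0)
      = (\<Sum>k<n. \<Sum>j<n. w j * ((cmod ((adj P * Q0) $$ (k,j)))\<^sup>2 - (if j = k then 1 else 0)) * y k)"
    using e by simp
qed

lemma trace_same:
  assumes P: "unitary n P"
  shows "Re (mtrace (P * diagm n (\<lambda>k. complex_of_real (y k)) * adj P * (P * diagm n (\<lambda>k. complex_of_real (w k)) * adj P)))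
     = (\<Sum>k<n. y k * w k)"
proof -
  have "adj P * P = 1\<^sub>m n" using unitaryD[OF P] by simp
  then have "Re (mtrace (P * diagm n (\<lambda>k. complex_of_real (y k)) * adj P * (P * diagm n (\<lambda>k. complex_of_real (w k)) * adj P)))
      = (\<Sum>k<n. \<Sum>j<n. y k * (cmod ((1\<^sub>m n :: complex mat) $$ (k,j)))\<^sup>2 * w j)"
    using trace_KX[OF P P] by simp
  also have "\<dots> = (\<Sum>k<n. \<Sum>j<n. if j = k then y k * w k else 0)"
    by (intro sum.cong refl) simp
  also have "\<dots> = (\<Sum>k<n. y k * w k)" by simp
  finally show ?thesis .
qed

lemma cyc3:
  assumes "H \<in> carrier_mat n n" "E \<in> carrier_mat n n" "X \<in> carrier_mat n n"
  shows "mtrace (H * (E * X * E)) = mtrace (E * H * E * X)"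
proof -
  have "H * (E * X * E) = (H * E * X) * E" using assms by (simp add: assocR[of _ n])
  then have "mtrace (H * (E * X * E)) = mtrace (E * (H * E * X))"
    using mtrace_comm[of "H * E * X" n n E] assms by simp
  also have "E * (H * E * X) = E * H * E * X" using assms by (simp add: assocR[of _ n])
  finally show ?thesis .
qed

lemma density_facts:
  assumes "density N \<rho>"
  shows "\<rho> \<in> carrier_mat N N" "adj \<rho> = \<rho>" "psd N \<rho>"
  using assms by (auto simp: density_def psd_def)

lemma Mf_zero:
  assumes D: "density (dS*dA) \<rho>" and np: "\<not> prob_a dS dA B \<rho> a > 0" and i: "i < dS" and j: "j < dS"
  shows "Mf dA B \<rho> a i j = 0"
proof (rule psd_zero[where n = dS])
  note df = density_facts[OF D]
  show "cnj (Mf dA B \<rho> a i j) = Mf dA B \<rho> a j i" if "i < dS" "j < dS" for i j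
    by (rule herm_Mf[OF df(1) df(2) that])
  show "0 \<le> Re (\<Sum>i<dS. \<Sum>j<dS. cnj (v i) * Mf dA B \<rho> a i j * v j)" for v
    by (rule psd_Mf[OF df(3)])
  show "Re (\<Sum>i<dS. Mf dA B \<rho> a i i) \<le> 0" using np prob_Mf[OF df(1)] by simp
qed (use i j in auto)

lemma cond_carrier: "cond_state dS dA B \<rho> a \<in> carrier_mat dS dS"
  by (simp add: cond_state_def ptrace_A_def)

lemma cond_sum:
  assumes B: "unitary dA B" and D: "density (dS*dA) \<rho>" and i: "i < dS" and j: "j < dS"
  shows "(\<Sum>a\<in>{a. a < dA \<and> prob_a dS dA B \<rho> a > 0}. complex_of_real (prob_a dS dA B \<rho> a) * cond_state dS dA B \<rho> a $$ (i,j))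
      = ptrace_A dS dA \<rho> $$ (i,j)"
proof -
  note df = density_facts[OF D]
  let ?S = "{a. a < dA \<and> prob_a dS dA B \<rho> a > 0}"
  have "(\<Sum>a\<in>?S. complex_of_real (prob_a dS dA B \<rho> a) * cond_state dS dA B \<rho> a $$ (i,j))
      = (\<Sum>a\<in>?S. Mf dA B \<rho> a i j)"
  proof (rule sum.cong[OF refl])
    fix a assume a: "a \<in> ?S"
    have "cond_state dS dA B \<rho> a $$ (i,j) = (1 / complex_of_real (prob_a dS dA B \<rho> a)) * Mf dA B \<rho> a i j"
      using a i j unfolding cond_state_def by (simp add: ptrace_Mf[OF B _ df(1)])
    then show "complex_of_real (prob_a dS dA B \<rho> a) * cond_state dS dA B \<rho> a $$ (i,j) = Mf dA B \<rho> a i j"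
      using a by simp
  qed
  also have "\<dots> = (\<Sum>a<dA. Mf dA B \<rho> a i j)"
    by (rule sum.mono_neutral_left) (use Mf_zero[OF D _ i j] in auto)
  also have "\<dots> = ptrace_A dS dA \<rho> $$ (i,j)" by (rule sum_Mf[OF B i j])
  finally show ?thesis .
qed

lemma lin_trace:
  assumes B: "unitary dA B" and D: "density (dS*dA) \<rho>" and K: "K \<in> carrier_mat dS dS"
  shows "(\<Sum>a\<in>{a. a < dA \<and> prob_a dS dA B \<rho> a > 0}. prob_a dS dA B \<rho> a * Re (mtrace (K * cond_state dS dA B \<rho> a)))
      = Re (mtrace (K * ptrace_A dS dA \<rho>))"
proof -
  let ?S = "{a. a < dA \<and> prob_a dS dA B \<rho> a > 0}"
  let ?p = "prob_a dS dA B \<rho>"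
  let ?c = "cond_state dS dA B \<rho>"
  have "(\<Sum>a\<in>?S. ?p a * Re (mtrace (K * ?c a)))
      = Re (\<Sum>a\<in>?S. complex_of_real (?p a) * (\<Sum>i<dS. \<Sum>j<dS. K $$ (i,j) * ?c a $$ (j,i)))"
    using K cond_carrier by (simp add: mtrace_entries)
  also have "(\<Sum>a\<in>?S. complex_of_real (?p a) * (\<Sum>i<dS. \<Sum>j<dS. K $$ (i,j) * ?c a $$ (j,i)))
      = (\<Sum>a\<in>?S. \<Sum>i<dS. \<Sum>j<dS. K $$ (i,j) * (complex_of_real (?p a) * ?c a $$ (j,i)))"
    by (simp add: sum_distrib_left mult_ac)
  also have "\<dots> = (\<Sum>i<dS. \<Sum>a\<in>?S. \<Sum>j<dS. K $$ (i,j) * (complex_of_real (?p a) * ?c a $$ (j,i)))"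
    by (rule sum.swap)
  also have "\<dots> = (\<Sum>i<dS. \<Sum>j<dS. \<Sum>a\<in>?S. K $$ (i,j) * (complex_of_real (?p a) * ?c a $$ (j,i)))"
    by (rule sum.cong[OF refl]) (rule sum.swap)
  also have "\<dots> = (\<Sum>i<dS. \<Sum>j<dS. K $$ (i,j) * ptrace_A dS dA \<rho> $$ (j,i))"
    by (intro sum.cong refl) (simp add: sum_distrib_left[symmetric] cond_sum[OF B D])
  also have "\<dots> = mtrace (K * ptrace_A dS dA \<rho>)"
    using K by (simp add: mtrace_entries ptrace_A_def)
  finally show ?thesis .
qed

lemma cond_dims[simp]: "dim_row (cond_state dS dA B \<rho> a) = dS" "dim_col (cond_state dS dA B \<rho> a) = dS"
  by (simp_all add: cond_state_def ptrace_A_def)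

theorem lemma1:
  fixes dS dA :: nat and W B :: "complex mat" and \<epsilon> :: "nat \<Rightarrow> real" and r :: real
    and \<rho> :: "complex mat" and Uu :: "complex mat" and uu :: "nat \<Rightarrow> real"
    and Ua :: "nat \<Rightarrow> complex mat" and ua :: "nat \<Rightarrow> nat \<Rightarrow> real"
  assumes "0 < dS" and "0 < dA"
    and "unitary dS W"
    and "\<And>i j. i < j \<Longrightarrow> j < dS \<Longrightarrow> \<epsilon> i < \<epsilon> j"
    and "r \<noteq> 0"
    and "density (dS * dA) \<rho>"
    and "unitary dA B"
  defines "u \<equiv> (\<lambda>w. (1 - exp (- r * w)) / r)"
    and "E \<equiv> W * diagm dS (\<lambda>k. complex_of_real (exp (- r * \<epsilon> k / 2))) * adj W"
    and "\<rho>S \<equiv> ptrace_A dS dA \<rho>"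
    and "p \<equiv> prob_a dS dA B \<rho>"
    and "y \<equiv> (\<lambda>k. exp (r * \<epsilon> k) / r)"
  assumes "unitary dS Uu"
    and "E * \<rho>S * E = Uu * diagm dS (\<lambda>k. complex_of_real (uu k)) * adj Uu"
    and "\<And>i j. i \<le> j \<Longrightarrow> j < dS \<Longrightarrow> uu j \<le> uu i"
    and "\<And>a. a < dA \<Longrightarrow> p a > 0 \<Longrightarrow> unitary dS (Ua a)"
    and "\<And>a. a < dA \<Longrightarrow> p a > 0 \<Longrightarrow>
           E * cond_state dS dA B \<rho> a * E = Ua a * diagm dS (\<lambda>k. complex_of_real (ua a k)) * adj (Ua a)"
    and "\<And>a i j. a < dA \<Longrightarrow> p a > 0 \<Longrightarrow> i \<le> j \<Longrightarrow> j < dS \<Longrightarrow> ua a j \<le> ua a i"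
  defines "Ht \<equiv> Uu * diagm dS (\<lambda>k. complex_of_real (y k)) * adj Uu"
    and "\<rho>t \<equiv> (\<lambda>a. E * cond_state dS dA B \<rho> a * E)"
  shows "daemonic_util dS dA W \<epsilon> u B \<rho> - opt_util dS W \<epsilon> u \<rho>S
           = (\<Sum>a\<in>{a. a < dA \<and> p a > 0}. p a * ergotropy dS Ht (\<rho>t a))
       \<and> (\<Sum>a\<in>{a. a < dA \<and> p a > 0}. p a * ergotropy dS Ht (\<rho>t a)) \<ge> 0
       \<and> (\<forall>a<dA. p a > 0 \<longrightarrow>
            ergotropy dS Ht (\<rho>t a)
              = (\<Sum>k<dS. \<Sum>j<dS. ua a j *
                   ((cmod ((adj Uu * Ua a) $$ (k,j)))\<^sup>2 - (if j = k then 1 else 0)) * y k))"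
proof -
  have eps: "\<And>i j. i < j \<Longrightarrow> j < dS \<Longrightarrow> \<epsilon> i < \<epsilon> j" by fact
  have Dn: "density (dS * dA) \<rho>" by fact
  have Bu: "unitary dA B" by fact
  have W: "unitary dS W" by fact
  have r: "r \<noteq> 0" by fact
  have Uu: "unitary dS Uu" by fact
  have Edef: "E = W * diagm dS (\<lambda>k. complex_of_real (exp (- r * \<epsilon> k / 2))) * adj W"
    by (simp add: E_def)
  have ydef: "y = (\<lambda>k. exp (r * \<epsilon> k) / r)" by (simp add: y_def)
  have ueq: "u = (\<lambda>w. (1 - exp (- r * w)) / r)" by (simp add: u_def)
  have ymono: "y i \<le> y j" if "i \<le> j" "j < dS" for i j
    unfolding ydef using y_mono[where r=r and n=dS and \<epsilon>=\<epsilon> and i=i and j=j, OF r eps that] by simp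
  have uuanti: "uu j \<le> uu i" if "i \<le> j" "j < dS" for i j using assms that by blast
  have uaanti: "ua a j \<le> ua a i" if "a < dA" "p a > 0" "i \<le> j" "j < dS" for a i j
    using assms that by blast
  have Ec: "E \<in> carrier_mat dS dS" unfolding Edef using unitaryD(1)[OF W] by simp
  have Htc: "Ht \<in> carrier_mat dS dS" unfolding Ht_def using unitaryD(1)[OF Uu] by simp
  have \<rho>Sc: "\<rho>S \<in> carrier_mat dS dS" unfolding \<rho>S_def ptrace_A_def by simp
  let ?S = "{a. a < dA \<and> p a > 0}"
  let ?c = "cond_state dS dA B \<rho>"
  have ERE: "E * \<rho>S * E = Uu * diagm dS (\<lambda>k. complex_of_real (uu k)) * adj Uu" by fact
  have opt: "opt_util dS W \<epsilon> u \<rho>S = Re (mtrace \<rho>S) / r - (\<Sum>k<dS. y k * uu k)"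
    unfolding ueq by (rule opt_util_form[OF W \<rho>Sc r Edef ydef ymono Uu ERE uuanti])
  have optA: "opt_util dS W \<epsilon> u (?c a) = Re (mtrace (?c a)) / r - (\<Sum>k<dS. y k * ua a k)"
    if a: "a \<in> ?S" for a
  proof -
    have Ua: "unitary dS (Ua a)" using assms a by blast
    have EcE: "E * ?c a * E = Ua a * diagm dS (\<lambda>k. complex_of_real (ua a k)) * adj (Ua a)"
      using assms a by blast
    show ?thesis unfolding ueq
      by (rule opt_util_form[OF W cond_carrier r Edef ydef ymono Ua EcE]) (use uaanti a in auto)
  qed
  have ergA: "ergotropy dS Ht (\<rho>t a) = Re (mtrace (Ht * \<rho>t a)) - (\<Sum>k<dS. y k * ua a k)"
    "0 \<le> ergotropy dS Ht (\<rho>t a)"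
    "ergotropy dS Ht (\<rho>t a) = (\<Sum>k<dS. \<Sum>j<dS. ua a j *
                   ((cmod ((adj Uu * Ua a) $$ (k,j)))\<^sup>2 - (if j = k then 1 else 0)) * y k)"
    if a: "a \<in> ?S" for a
  proof -
    have Ua: "unitary dS (Ua a)" using assms a by blast
    have rt: "\<rho>t a = Ua a * diagm dS (\<lambda>k. complex_of_real (ua a k)) * adj (Ua a)"
      unfolding \<rho>t_def using assms a by blast
    have wanti: "\<And>i j. i \<le> j \<Longrightarrow> j < dS \<Longrightarrow> ua a j \<le> ua a i" using uaanti a by auto
    show "ergotropy dS Ht (\<rho>t a) = Re (mtrace (Ht * \<rho>t a)) - (\<Sum>k<dS. y k * ua a k)"
      unfolding rt Ht_def by (rule ergo_form[OF Uu Ua ymono wanti])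
    show "0 \<le> ergotropy dS Ht (\<rho>t a)"
      unfolding rt Ht_def by (rule ergo_explicit(2)[OF Uu Ua ymono wanti])
    show "ergotropy dS Ht (\<rho>t a) = (\<Sum>k<dS. \<Sum>j<dS. ua a j *
                   ((cmod ((adj Uu * Ua a) $$ (k,j)))\<^sup>2 - (if j = k then 1 else 0)) * y k)"
      unfolding rt Ht_def by (rule ergo_explicit(1)[OF Uu Ua ymono wanti])
  qed
  have T1: "(\<Sum>a\<in>?S. p a * Re (mtrace (?c a))) = Re (mtrace \<rho>S)"
  proof -
    have "(\<Sum>a\<in>?S. p a * Re (mtrace (?c a))) = (\<Sum>a\<in>?S. p a * Re (mtrace (1\<^sub>m dS * ?c a)))"
      by simp
    also have "\<dots> = Re (mtrace (1\<^sub>m dS * \<rho>S))"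
      unfolding p_def \<rho>S_def by (rule lin_trace[OF Bu Dn]) simp
    also have "\<dots> = Re (mtrace \<rho>S)" using \<rho>Sc by simp
    finally show ?thesis .
  qed
  have T2: "(\<Sum>a\<in>?S. p a * Re (mtrace (Ht * \<rho>t a))) = (\<Sum>k<dS. y k * uu k)"
  proof -
    have "(\<Sum>a\<in>?S. p a * Re (mtrace (Ht * \<rho>t a))) = (\<Sum>a\<in>?S. p a * Re (mtrace (E * Ht * E * ?c a)))"
      unfolding \<rho>t_def using cyc3[OF Htc Ec cond_carrier] by simp
    also have "\<dots> = Re (mtrace (E * Ht * E * \<rho>S))"
      unfolding p_def \<rho>S_def by (rule lin_trace[OF Bu Dn]) (use Ec Htc in simp)
    also have "\<dots> = Re (mtrace (Ht * (E * \<rho>S * E)))" using cyc3[OF Htc Ec \<rho>Sc] by simp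
    also have "\<dots> = (\<Sum>k<dS. y k * uu k)" unfolding ERE Ht_def by (rule trace_same[OF Uu])
    finally show ?thesis .
  qed
  have daem: "daemonic_util dS dA W \<epsilon> u B \<rho> = (\<Sum>a\<in>?S. p a * (Re (mtrace (?c a)) / r - (\<Sum>k<dS. y k * ua a k)))"
    unfolding daemonic_util_def p_def[symmetric] by (rule sum.cong[OF refl]) (simp add: optA)
  have ergsum: "(\<Sum>a\<in>?S. p a * ergotropy dS Ht (\<rho>t a)) = (\<Sum>a\<in>?S. p a * (Re (mtrace (Ht * \<rho>t a)) - (\<Sum>k<dS. y k * ua a k)))"
    by (rule sum.cong[OF refl]) (simp add: ergA(1))
  have eq1: "daemonic_util dS dA W \<epsilon> u B \<rho> - opt_util dS W \<epsilon> u \<rho>S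
      = (\<Sum>a\<in>?S. p a * ergotropy dS Ht (\<rho>t a))"
  proof -
    have "daemonic_util dS dA W \<epsilon> u B \<rho> = (\<Sum>a\<in>?S. p a * Re (mtrace (?c a))) / r - (\<Sum>a\<in>?S. p a * (\<Sum>k<dS. y k * ua a k))"
      unfolding daem by (simp add: right_diff_distrib sum_subtractf sum_divide_distrib)
    moreover have "(\<Sum>a\<in>?S. p a * ergotropy dS Ht (\<rho>t a)) = (\<Sum>a\<in>?S. p a * Re (mtrace (Ht * \<rho>t a))) - (\<Sum>a\<in>?S. p a * (\<Sum>k<dS. y k * ua a k))"
      unfolding ergsum by (simp add: right_diff_distrib sum_subtractf)
    ultimately show ?thesis unfolding opt T1 T2 by simp
  qed
  have nn: "0 \<le> (\<Sum>a\<in>?S. p a * ergotropy dS Ht (\<rho>t a))"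
    by (rule sum_nonneg) (use ergA(2) in auto)
  have ex: "\<forall>a<dA. p a > 0 \<longrightarrow>
            ergotropy dS Ht (\<rho>t a)
              = (\<Sum>k<dS. \<Sum>j<dS. ua a j *
                   ((cmod ((adj Uu * Ua a) $$ (k,j)))\<^sup>2 - (if j = k then 1 else 0)) * y k)"
    using ergA(3) by auto
  show ?thesis using eq1 nn ex by blast
qed


end
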